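(* The probability that $\mathcal{X}$ is not $\delta$-sparse is at most \[ n^{16d\sqrt{k}+12}\cdot\left(\frac{n^4\delta}{\sigma}\right)^d. \]
   Context: Setting: positive integers $n,k,d$ with $k\le n$, $d\le n$; $\sigma>0$; adversarial $\mu_1,\ldots,\mu_n\in[0,1]^d$; $\mathcal{X}=\{x_1,\ldots,x_n\}$ with $x_i=\mu_i+g_i$, where the $g_i$ are independent $d$-dimensional Gaussian vectors with mean $0$ and independent coordinates of standard deviation $\sigma$. ($\sqrt{k}$ is treated as an integer.) A key-value is an expression $K=\frac{s}{t}\cdot\mathrm{cm}(S)$ with $s,t\in\mathbb{N}$, $s\le n^2$, $t<n$, and $S\subseteq\mathcal{X}$ a set of at most $4d\sqrt{k}$ points, where $\mathrm{cm}(S)$ is the center of mass of $S$; it is thus a formal linear combination of the data points. For key-values (or sums of key-values) $K,K'$, write $K\equiv K'$ iff they have identical coefficients for every data point. $\mathcal{X}$ is $\delta$-sparse if for all key-values $K_1,K_2,K_3,K_4$ with $\|K_1+K_2-K_3-K_4\|\le\delta$ we have $K_1+K_2\equiv K_3+K_4$. *)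

theory Defs
  imports "HOL-Probability.Probability"
begin

text \<open>Data points are indexed by i < n. A key-value (s/t) cm(S) is represented by its
  coefficient vector over the data points: coefficient s/(t |S|) on each i in S, 0 elsewhere.\<close>

definition key_coeffs :: "nat \<Rightarrow> nat \<Rightarrow> nat set \<Rightarrow> nat \<Rightarrow> real" where
  "key_coeffs s t S = (\<lambda>i. if i \<in> S then real s / (real t * real (card S)) else 0)"

definition is_key_value :: "nat \<Rightarrow> nat \<Rightarrow> nat \<Rightarrow> (nat \<Rightarrow> real) \<Rightarrow> bool" where
  "is_key_value n d k c \<longleftrightarrow>
     (\<exists>s t S. 1 \<le> s \<and> s \<le> n^2 \<and> 1 \<le> t \<and> t < n \<and> S \<subseteq> {..<n} \<and> S \<noteq> {} \<and>
        real (card S) \<le> 4 * real d * sqrt (real k) \<and> c = key_coeffs s t S)"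

definition lincomb :: "nat \<Rightarrow> (nat \<Rightarrow> 'a::real_vector) \<Rightarrow> (nat \<Rightarrow> real) \<Rightarrow> 'a" where
  "lincomb n x c = (\<Sum>i<n. c i *\<^sub>R x i)"

definition delta_sparse :: "nat \<Rightarrow> nat \<Rightarrow> nat \<Rightarrow> real \<Rightarrow> (nat \<Rightarrow> 'a::real_normed_vector) \<Rightarrow> bool" where
  "delta_sparse n d k \<delta> x \<longleftrightarrow>
     (\<forall>c1 c2 c3 c4. is_key_value n d k c1 \<and> is_key_value n d k c2 \<and>
        is_key_value n d k c3 \<and> is_key_value n d k c4 \<and>
        norm (lincomb n x c1 + lincomb n x c2 - lincomb n x c3 - lincomb n x c4) \<le> \<delta>
        \<longrightarrow> (\<lambda>i. c1 i + c2 i) = (\<lambda>i. c3 i + c4 i))"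

end

theory Submission
  imports Defs
begin


lemma normal_density_le:
  assumes "\<sigma> > 0"
  shows "normal_density 0 \<sigma> x \<le> 1 / (2 * \<sigma>)"
proof -
  have "exp (-(x - 0)\<^sup>2/ (2 * \<sigma>\<^sup>2)) \<le> 1" by simp
  moreover have "sqrt (2 * pi * \<sigma>\<^sup>2) = sqrt (2*pi) * \<sigma>" using assms
    by (simp add: real_sqrt_mult)
  moreover have "sqrt (2*pi) \<ge> 2"
    using pi_gt3 by (simp add: real_le_rsqrt)
  ultimately have "normal_density 0 \<sigma> x \<le> 1 / (sqrt (2*pi) * \<sigma>)"
    unfolding normal_density_def using assms
    by (simp add: divide_right_mono)
  also have "\<dots> \<le> 1 / (2 * \<sigma>)" using \<open>sqrt (2*pi) \<ge> 2\<close> assms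
    by (intro divide_left_mono) auto
  finally show ?thesis .
qed

lemma gauss_1d:
  assumes "\<sigma> > 0" "c \<noteq> 0" "r > 0"
  shows "emeasure (density lborel (normal_density 0 \<sigma>)) {y. \<bar>b + c * y\<bar> \<le> r} \<le> ennreal (r / (\<bar>c\<bar> * \<sigma>))"
proof -
  let ?A = "{y::real. \<bar>b + c * y\<bar> \<le> r}"
  have sub: "?A \<subseteq> {-b/c - r/\<bar>c\<bar> .. -b/c + r/\<bar>c\<bar>}"
  proof
    fix y assume "y \<in> ?A"
    then have h: "\<bar>b + c * y\<bar> \<le> r" by simp
    have e: "b + c * y = c * (y + b/c)" using assms(2) by (simp add: field_simps)
    have "\<bar>c\<bar> * \<bar>y + b/c\<bar> \<le> r" using h unfolding e abs_mult .
    then have "\<bar>y + b/c\<bar> \<le> r/\<bar>c\<bar>" using assms(2) by (simp add: pos_le_divide_eq mult.commute)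
    then show "y \<in> {-b/c - r/\<bar>c\<bar> .. -b/c + r/\<bar>c\<bar>}" by (simp add: abs_le_iff)
  qed
  have Am: "?A \<in> sets borel" by measurable
  have "emeasure (density lborel (normal_density 0 \<sigma>)) ?A = (\<integral>\<^sup>+ y. ennreal (normal_density 0 \<sigma> y) * indicator ?A y \<partial>lborel)"
    using Am by (simp add: emeasure_density)
  also have "\<dots> \<le> (\<integral>\<^sup>+ y. ennreal (1/(2*\<sigma>)) * indicator {-b/c - r/\<bar>c\<bar> .. -b/c + r/\<bar>c\<bar>} y \<partial>lborel)"
    using sub normal_density_le[OF assms(1)]
    by (intro nn_integral_mono) (auto simp: indicator_def ennreal_leI)
  also have "\<dots> = ennreal (1/(2*\<sigma>)) * emeasure lborel {-b/c - r/\<bar>c\<bar> .. -b/c + r/\<bar>c\<bar>}"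
    by (rule nn_integral_cmult_indicator) simp
  also have "\<dots> = ennreal (r / (\<bar>c\<bar> * \<sigma>))"
  proof -
    have l: "emeasure lborel {-b/c - r/\<bar>c\<bar> .. -b/c + r/\<bar>c\<bar>} = ennreal (2 * r / \<bar>c\<bar>)"
      using assms by (subst emeasure_lborel_Icc) auto
    have m: "ennreal (1/(2*\<sigma>)) * ennreal (2 * r / \<bar>c\<bar>) = ennreal (1/(2*\<sigma>) * (2 * r / \<bar>c\<bar>))"
      using assms by (intro ennreal_mult[symmetric]) auto
    have e: "1/(2*\<sigma>) * (2 * r / \<bar>c\<bar>) = r / (\<bar>c\<bar> * \<sigma>)"
      using assms by (simp add: field_simps)
    show ?thesis unfolding l m e ..
  qed
  finally show ?thesis .
qed




lemma gauss_box:
  fixes b :: "'d::finite \<Rightarrow> real"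
  assumes "\<sigma> > 0" "c \<noteq> 0" "r > 0"
  shows "emeasure (PiM (UNIV :: 'd set) (\<lambda>_. density lborel (normal_density 0 \<sigma>))) {y. \<forall>j. \<bar>b j + c * y j\<bar> \<le> r}
     \<le> ennreal ((r / (\<bar>c\<bar> * \<sigma>)) ^ CARD('d))"
proof -
  let ?N = "density lborel (normal_density 0 \<sigma>)"
  have PN: "prob_space ?N" by (rule prob_space_normal_density) (rule assms(1))
  interpret product_prob_space "\<lambda>_::'d. ?N" UNIV
    by (simp add: product_prob_space_def product_sigma_finite_def product_prob_space_axioms_def PN prob_space_imp_sigma_finite)
  have eq: "{y. \<forall>j. \<bar>b j + c * y j\<bar> \<le> r} = PiE UNIV (\<lambda>j. {y. \<bar>b j + c * y\<bar> \<le> r})"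
    by (auto simp: PiE_UNIV_domain Pi_iff)
  have ms: "{y. \<bar>b j + c * y\<bar> \<le> r} \<in> sets ?N" for j
  proof -
    have "{y. \<bar>b j + c * y\<bar> \<le> r} \<in> sets borel" by measurable
    then show ?thesis by simp
  qed
  have "emeasure (PiM (UNIV :: 'd set) (\<lambda>_. ?N)) {y. \<forall>j. \<bar>b j + c * y j\<bar> \<le> r}
      = (\<Prod>j\<in>UNIV. emeasure ?N {y. \<bar>b j + c * y\<bar> \<le> r})"
    unfolding eq by (rule emeasure_PiM) (simp_all add: ms)
  also have "\<dots> \<le> (\<Prod>j\<in>(UNIV::'d set). ennreal (r / (\<bar>c\<bar> * \<sigma>)))"
    by (rule prod_mono_ennreal) (rule gauss_1d[OF assms])
  also have "\<dots> = ennreal ((r / (\<bar>c\<bar> * \<sigma>)) ^ CARD('d))"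
    using assms by (simp add: ennreal_power)
  finally show ?thesis .
qed




lemma comp2_meas:
  fixes N :: "real measure"
  assumes "i \<in> I" "sets N = sets borel"
  shows "(\<lambda>x. x i j) \<in> borel_measurable (PiM I (\<lambda>i. PiM (UNIV :: 'd set) (\<lambda>_. N)))"
proof -
  have h1: "(\<lambda>x. x i) \<in> measurable (PiM I (\<lambda>i. PiM (UNIV :: 'd set) (\<lambda>_. N))) (PiM (UNIV :: 'd set) (\<lambda>_. N))"
    using assms(1) by (rule measurable_component_singleton)
  have h2: "(\<lambda>y. y j) \<in> measurable (PiM (UNIV :: 'd set) (\<lambda>_. N)) N"
    by (rule measurable_component_singleton) (rule UNIV_I)
  have h3: "(\<lambda>x. x) \<in> measurable N borel" by (rule measurable_ident_sets[OF assms(2)])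
  show ?thesis using measurable_compose[OF measurable_compose[OF h1 h2] h3] .
qed

lemma lin_meas:
  fixes N :: "real measure" and w :: "nat \<Rightarrow> real" and c :: "nat \<Rightarrow> 'd \<Rightarrow> real"
  assumes "sets N = sets borel"
  shows "(\<lambda>g. b + (\<Sum>i<n. w i * (c i j + g i j))) \<in> borel_measurable (PiM {..<n} (\<lambda>i. PiM (UNIV :: 'd set) (\<lambda>_. N)))"
proof -
  have "(\<lambda>g. w i * (c i j + g i j)) \<in> borel_measurable (PiM {..<n} (\<lambda>i. PiM (UNIV :: 'd set) (\<lambda>_. N)))"
    if "i \<in> {..<n}" for i
    by (rule borel_measurable_times[OF borel_measurable_const borel_measurable_add[OF borel_measurable_const comp2_meas[OF that assms]]])
  then have "(\<lambda>g. \<Sum>i<n. w i * (c i j + g i j)) \<in> borel_measurable (PiM {..<n} (\<lambda>i. PiM (UNIV :: 'd set) (\<lambda>_. N)))"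
    by (rule borel_measurable_sum)
  then show ?thesis by (rule borel_measurable_add[OF borel_measurable_const])
qed

lemma meas_le_set:
  "f \<in> borel_measurable M \<Longrightarrow> {w \<in> space M. f w \<le> (a::real)} \<in> sets M"
  by (simp add: borel_measurable_iff_le)

lemma event_meas:
  fixes a :: "'d::finite \<Rightarrow> real" and w :: "nat \<Rightarrow> real"
  shows "{g \<in> space (PiM {..<n} (\<lambda>_. PiM (UNIV :: 'd set) (\<lambda>_. density lborel (normal_density 0 \<sigma>)))).
     \<forall>j. \<bar>a j + (\<Sum>i<n. w i * g i j)\<bar> \<le> \<delta>} \<in> sets (PiM {..<n} (\<lambda>_. PiM (UNIV :: 'd set) (\<lambda>_. density lborel (normal_density 0 \<sigma>))))"
    (is "{g \<in> space ?M. _} \<in> _")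
proof -
  have e: "{g \<in> space ?M. \<forall>j. \<bar>a j + (\<Sum>i<n. w i * g i j)\<bar> \<le> \<delta>}
     = {g \<in> space ?M. \<forall>j\<in>UNIV. \<bar>a j + (\<Sum>i<n. w i * (0 + g i j))\<bar> \<le> \<delta>}" by simp
  show ?thesis unfolding e
  proof (rule sets.sets_Collect_finite_All)
    fix j :: 'd
    have "(\<lambda>g. a j + (\<Sum>i<n. w i * ((\<lambda>i j. 0) i j + g i j))) \<in> borel_measurable ?M"
      by (rule lin_meas) simp
    then have "(\<lambda>g. \<bar>a j + (\<Sum>i<n. w i * (0 + g i j))\<bar>) \<in> borel_measurable ?M"
      by (intro borel_measurable_abs) simp
    then show "{g \<in> space ?M. \<bar>a j + (\<Sum>i<n. w i * (0 + g i j))\<bar> \<le> \<delta>} \<in> sets ?M"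
      by (rule meas_le_set)
  qed simp
qed

lemma sq_meas:
  fixes w :: "nat \<Rightarrow> real" and c :: "nat \<Rightarrow> 'd::finite \<Rightarrow> real"
  shows "{g \<in> space (PiM {..<n} (\<lambda>_. PiM (UNIV :: 'd set) (\<lambda>_. density lborel (normal_density 0 \<sigma>)))).
     sqrt (\<Sum>j\<in>UNIV. (\<Sum>i<n. w i * (c i j + g i j))\<^sup>2) \<le> \<delta>} \<in> sets (PiM {..<n} (\<lambda>_. PiM (UNIV :: 'd set) (\<lambda>_. density lborel (normal_density 0 \<sigma>))))"
    (is "{g \<in> space ?M. _} \<in> _")
proof (rule meas_le_set)
  have "(\<lambda>g. 0 + (\<Sum>i<n. w i * (c i j + g i j))) \<in> borel_measurable ?M" for j
    by (rule lin_meas) simp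
  then have "(\<lambda>g. (\<Sum>i<n. w i * (c i j + g i j))\<^sup>2) \<in> borel_measurable ?M" for j
    by (intro borel_measurable_power) simp
  then have "(\<lambda>g. \<Sum>j\<in>UNIV. (\<Sum>i<n. w i * (c i j + g i j))\<^sup>2) \<in> borel_measurable ?M"
    by (rule borel_measurable_sum)
  then show "(\<lambda>g. sqrt (\<Sum>j\<in>UNIV. (\<Sum>i<n. w i * (c i j + g i j))\<^sup>2)) \<in> borel_measurable ?M"
    by (rule measurable_compose) (rule borel_measurable_sqrt)
qed




lemma event_bound:
  fixes a :: "'d::finite \<Rightarrow> real" and w :: "nat \<Rightarrow> real"
  assumes "\<sigma> > 0" "\<delta> > 0" "i0 < n" "w i0 \<noteq> 0"
  defines "P \<equiv> PiM (UNIV :: 'd set) (\<lambda>_. density lborel (normal_density 0 \<sigma>))"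
  defines "M \<equiv> PiM {..<n} (\<lambda>_. P)"
  shows "emeasure M {g \<in> space M. \<forall>j. \<bar>a j + (\<Sum>i<n. w i * g i j)\<bar> \<le> \<delta>}
     \<le> ennreal ((\<delta> / (\<bar>w i0\<bar> * \<sigma>)) ^ CARD('d))"
proof -
  let ?N = "density lborel (normal_density 0 \<sigma>)"
  let ?B = "{g \<in> space M. \<forall>j. \<bar>a j + (\<Sum>i<n. w i * g i j)\<bar> \<le> \<delta>}"
  let ?K = "ennreal ((\<delta> / (\<bar>w i0\<bar> * \<sigma>)) ^ CARD('d))"
  define I where "I = {..<n} - {i0}"
  have nI: "{..<n} = insert i0 I" "finite I" "i0 \<notin> I" using assms(3) by (auto simp: I_def)
  have PP: "prob_space P" unfolding P_def
    by (intro prob_space_PiM prob_space_normal_density assms(1))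
  interpret Pp: product_prob_space "\<lambda>_::nat. P" UNIV
    by (simp add: product_prob_space_def product_sigma_finite_def product_prob_space_axioms_def PP prob_space_imp_sigma_finite)
  have Bm: "?B \<in> sets M" unfolding M_def P_def by (rule event_meas)
  have "emeasure M ?B = (\<integral>\<^sup>+ g. indicator ?B g \<partial>M)"
    using Bm by simp
  also have "\<dots> = (\<integral>\<^sup>+ x. (\<integral>\<^sup>+ y. indicator ?B (x(i0 := y)) \<partial>P) \<partial>(PiM I (\<lambda>_. P)))"
  proof -
    have Meq: "M = PiM (insert i0 I) (\<lambda>_. P)" by (simp only: M_def nI(1))
    have "sets M = sets (PiM (insert i0 I) (\<lambda>_. P))" using Meq by (rule arg_cong)
    then have Bm': "?B \<in> sets (PiM (insert i0 I) (\<lambda>_. P))" using Bm by (simp only:)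
    have "(\<integral>\<^sup>+ g. indicator ?B g \<partial>M) = (\<integral>\<^sup>+ g. indicator ?B g \<partial>(PiM (insert i0 I) (\<lambda>_. P)))"
      by (simp only: Meq)
    also have "\<dots> = (\<integral>\<^sup>+ x. (\<integral>\<^sup>+ y. indicator ?B (x(i0 := y)) \<partial>P) \<partial>(PiM I (\<lambda>_. P)))"
      by (rule Pp.product_nn_integral_insert[OF nI(2,3) borel_measurable_indicator[OF Bm']])
    finally show ?thesis .
  qed
  also have "\<dots> \<le> (\<integral>\<^sup>+ x. ?K \<partial>(PiM I (\<lambda>_. P)))"
  proof (rule nn_integral_mono)
    fix x :: "nat \<Rightarrow> 'd \<Rightarrow> real"
    define b where "b j = a j + (\<Sum>i\<in>I. w i * x i j)" for j
    let ?C = "{y. \<forall>j. \<bar>b j + w i0 * y j\<bar> \<le> \<delta>}"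
    have Cm: "?C \<in> sets P"
    proof -
      have "?C = PiE UNIV (\<lambda>j. {y. \<bar>b j + w i0 * y\<bar> \<le> \<delta>})"
        by (auto simp: PiE_UNIV_domain)
      also have "\<dots> \<in> sets P" unfolding P_def
        by (rule sets_PiM_I_finite) auto
      finally show ?thesis .
    qed
    have sumeq: "(\<Sum>i<n. w i * (x(i0 := y)) i j) = w i0 * y j + (\<Sum>i\<in>I. w i * x i j)" for y j
    proof -
      have "(\<Sum>i\<in>I. w i * (x(i0 := y)) i j) = (\<Sum>i\<in>I. w i * x i j)"
        by (rule sum.cong[OF refl]) (use nI(3) in auto)
      then show ?thesis unfolding nI(1) using nI(2,3) by (simp add: sum.insert)
    qed
    have ind: "indicator ?B (x(i0 := y)) \<le> (indicator ?C y :: ennreal)" for y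
    proof (cases "x(i0 := y) \<in> ?B")
      case True
      then have h: "\<forall>j. \<bar>a j + (\<Sum>i<n. w i * (x(i0 := y)) i j)\<bar> \<le> \<delta>" by blast
      have "y \<in> ?C"
      proof (simp only: mem_Collect_eq, intro allI)
        fix j
        show "\<bar>b j + w i0 * y j\<bar> \<le> \<delta>"
          using h[rule_format, of j] unfolding sumeq b_def by (simp add: algebra_simps)
      qed
      then show ?thesis by (simp add: indicator_def)
    qed simp
    have "(\<integral>\<^sup>+ y. indicator ?B (x(i0 := y)) \<partial>P) \<le> (\<integral>\<^sup>+ y. indicator ?C y \<partial>P)"
      by (rule nn_integral_mono) (rule ind)
    also have "\<dots> = emeasure P ?C" using Cm by simp
    also have "\<dots> \<le> ?K" unfolding P_def
      by (rule gauss_box) (use assms in auto)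
    finally show "(\<integral>\<^sup>+ y. indicator ?B (x(i0 := y)) \<partial>P) \<le> ?K" .
  qed
  also have "\<dots> = ?K"
  proof -
    interpret PI: prob_space "PiM I (\<lambda>_. P)" by (intro prob_space_PiM PP)
    show ?thesis by (simp add: PI.emeasure_space_1)
  qed
  finally show ?thesis .
qed




lemma fact_sq_ge: "m ^ m \<le> (fact m :: nat) ^ 2"
proof -
  have f: "(fact m :: nat) = \<Prod>{1..m}" by (simp add: fact_prod)
  have r: "(\<Prod>i\<in>{1..m}. i) = (\<Prod>i\<in>{1..m}. m + 1 - i)"
    by (rule prod.atLeastAtMost_rev[of "\<lambda>i. i" 1 m])
  have "(fact m :: nat) ^ 2 = (\<Prod>i\<in>{1..m}. i) * (\<Prod>i\<in>{1..m}. m + 1 - i)"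
    unfolding power2_eq_square f by (subst (2) r) (rule refl)
  also have "\<dots> = (\<Prod>i\<in>{1..m}. i * (m + 1 - i))" by (simp add: prod.distrib)
  also have "\<dots> \<ge> (\<Prod>i\<in>{1..m}. m)"
  proof (rule prod_mono)
    fix i assume "i \<in> {1..m}"
    then have i1: "1 \<le> i" and im: "i \<le> m" by auto
    obtain b where b: "m = i + b" using im le_iff_add by blast
    obtain a where a: "i = Suc a" using i1 by (cases i) auto
    have "m + 1 - i = b + 1" using b by simp
    then have "i * (m + 1 - i) = (Suc a) * (b + 1)" using a by simp
    also have "\<dots> \<ge> m" using a b by simp
    finally show "0 \<le> m \<and> m \<le> i * (m + 1 - i)" by simp
  qed
  finally show ?thesis by simp
qed

lemma pow_le_fact:
  assumes "1 \<le> d" "4 * d \<le> m"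
  shows "m ^ (d + 1) \<le> (fact m :: nat)"
proof -
  have "(m ^ (d + 1)) ^ 2 = m ^ ((d + 1) * 2)" by (rule power_mult[symmetric])
  also have "\<dots> = m ^ (2 * d + 2)" by (intro arg_cong[where f="power m"]) simp
  also have "\<dots> \<le> m ^ m" by (rule power_increasing) (use assms in simp_all)
  also have "\<dots> \<le> (fact m) ^ 2" by (rule fact_sq_ge)
  finally have "(m ^ (d + 1)) ^ 2 \<le> (fact m) ^ 2" .
  then show ?thesis by (rule power2_le_imp_le) simp
qed

lemma fact_le_fact_pow:
  assumes "j \<le> m"
  shows "(fact m :: nat) \<le> fact j * m ^ (m - j)"
  using assms
proof (induction m rule: dec_induct)
  case base then show ?case by simp
next
  case (step k)
  have "(fact (Suc k) :: nat) = Suc k * fact k" by simp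
  also have "\<dots> \<le> Suc k * (fact j * k ^ (k - j))" using step(3) by (rule mult_le_mono2)
  also have "\<dots> \<le> Suc k * (fact j * Suc k ^ (k - j))"
    by (intro mult_le_mono2 power_mono) auto
  also have "\<dots> = fact j * Suc k ^ (Suc k - j)" using step(1) by (simp add: Suc_diff_le algebra_simps)
  finally show ?case .
qed

lemma choose_fact_le:
  assumes "j \<le> m" "m \<le> n"
  shows "(n choose j) * fact m \<le> (n ^ m :: nat)"
proof -
  have "(n choose j) * fact m \<le> (n choose j) * (fact j * m ^ (m - j))"
    using fact_le_fact_pow[OF assms(1)] by simp
  also have "\<dots> = ((n choose j) * fact j) * m ^ (m - j)" by simp
  also have "\<dots> \<le> n ^ j * n ^ (m - j)"
    by (intro mult_le_mono binomial_fact_pow power_mono assms(2) zero_le)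
  also have "\<dots> = n ^ m" using assms by (simp add: power_add[symmetric])
  finally show ?thesis .
qed

lemma two_pow_le:
  assumes "2 \<le> n" "n \<le> m" "4 * d \<le> m"
  shows "(2::nat) ^ n \<le> n ^ (m - d)"
proof (cases "n = 2")
  case True
  then have "(2::nat) ^ n \<le> 2 ^ (m - d)" using assms by (intro power_increasing) auto
  then show ?thesis using True by simp
next
  case False
  then have n3: "3 \<le> n" using assms by simp
  have "((2::nat) ^ n) ^ 4 = (2 ^ 4) ^ n" by (simp only: power_mult[symmetric] mult.commute)
  also have "\<dots> = 16 ^ n" by simp
  also have "\<dots> \<le> 27 ^ n" by (intro power_mono) auto
  also have "\<dots> = (3 ^ 3) ^ n" by simp
  also have "\<dots> \<le> (n ^ 3) ^ n" by (intro power_mono n3) auto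
  also have "\<dots> = n ^ (3 * n)" by (simp add: power_mult)
  also have "\<dots> \<le> n ^ (4 * (m - d))" using assms n3 by (intro power_increasing) auto
  also have "\<dots> = (n ^ (m - d)) ^ 4" by (simp add: power_mult[symmetric] mult.commute)
  finally have "((2::nat) ^ n) ^ 4 \<le> (n ^ (m - d)) ^ 4" .
  then show ?thesis by (subst (asm) power_mono_iff) auto
qed

definition Sub :: "nat \<Rightarrow> nat \<Rightarrow> nat set set" where
  "Sub n m = {S. S \<subseteq> {..<n} \<and> S \<noteq> {} \<and> card S \<le> m}"

lemma Sub_finite: "finite (Sub n m)"
proof -
  have "Sub n m \<subseteq> Pow {..<n}" by (auto simp: Sub_def)
  then show ?thesis by (rule finite_subset) auto
qed

lemma Sub_sum:
  assumes "1 \<le> d" "4 * d \<le> m"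
  shows "(\<Sum>S\<in>Sub n m. card S ^ d) \<le> n ^ m"
proof (cases "n \<le> m")
  case True
  show ?thesis
  proof (cases "n \<le> 1")
    case True
    have "Sub n m \<subseteq> {{0}}"
    proof
      fix S assume "S \<in> Sub n m"
      then have "S \<subseteq> {0}" "S \<noteq> {}" using True by (auto simp: Sub_def)
      then show "S \<in> {{0}}" by (simp add: subset_singleton_iff)
    qed
    then have "(\<Sum>S\<in>Sub n m. card S ^ d) \<le> (\<Sum>S\<in>{{0::nat}}. card S ^ d)"
      by (intro sum_mono2) auto
    also have "\<dots> = 1" by simp
    moreover have "n = 0 \<Longrightarrow> Sub n m = {}" by (auto simp: Sub_def)
    moreover have "n = 0 \<or> n = 1" using True by auto
    ultimately show ?thesis by auto
  next
    case False
    have "(\<Sum>S\<in>Sub n m. card S ^ d) \<le> (\<Sum>S\<in>Sub n m. n ^ d)"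
    proof (rule sum_mono)
      fix S assume "S \<in> Sub n m"
      then have "card S \<le> n" unfolding Sub_def
        by (metis (no_types, lifting) card_lessThan card_mono finite_lessThan mem_Collect_eq)
      then show "card S ^ d \<le> n ^ d" by (rule power_mono) simp
    qed
    also have "\<dots> = card (Sub n m) * n ^ d" by simp
    also have "\<dots> \<le> 2 ^ n * n ^ d"
    proof -
      have "card (Sub n m) \<le> card (Pow {..<n})"
        by (intro card_mono) (auto simp: Sub_def)
      then show ?thesis by (simp add: card_Pow)
    qed
    also have "\<dots> \<le> n ^ (m - d) * n ^ d"
      using two_pow_le[of n m d] False True assms by simp
    also have "\<dots> = n ^ m" using assms by (simp add: power_add[symmetric])
    finally show ?thesis .
  qed
next
  case False
  have m1: "1 \<le> m" using assms by simp
  have "(\<Sum>S\<in>Sub n m. card S ^ d) \<le> (\<Sum>S\<in>Sub n m. m ^ d)"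
    by (intro sum_mono power_mono) (auto simp: Sub_def)
  also have "\<dots> = card (Sub n m) * m ^ d" by simp
  finally have A: "(\<Sum>S\<in>Sub n m. card S ^ d) \<le> card (Sub n m) * m ^ d" .
  have "Sub n m \<subseteq> (\<Union>j\<in>{1..m}. {S. S \<subseteq> {..<n} \<and> card S = j})"
    by (auto simp: Sub_def Suc_le_eq card_gt_0_iff dest: finite_subset)
  then have "card (Sub n m) \<le> card (\<Union>j\<in>{1..m}. {S. S \<subseteq> {..<n} \<and> card S = j})"
    by (intro card_mono) auto
  also have "\<dots> \<le> (\<Sum>j\<in>{1..m}. card {S. S \<subseteq> {..<n} \<and> card S = j})"
    by (rule card_UN_le) simp
  also have "\<dots> = (\<Sum>j\<in>{1..m}. n choose j)" by (simp add: n_subsets)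
  finally have B: "card (Sub n m) * fact m \<le> (\<Sum>j\<in>{1..m}. (n choose j) * fact m)"
    by (simp add: sum_distrib_right[symmetric])
  also have "\<dots> \<le> (\<Sum>j\<in>{1..m}. n ^ m)"
    using False by (intro sum_mono choose_fact_le) auto
  also have "\<dots> = m * n ^ m" by simp
  finally have C: "card (Sub n m) * fact m \<le> m * n ^ m" .
  have "m * (card (Sub n m) * m ^ d) = card (Sub n m) * m ^ (d + 1)" by simp
  also have "\<dots> \<le> card (Sub n m) * fact m" using pow_le_fact[OF assms] by simp
  also have "\<dots> \<le> m * n ^ m" by (rule C)
  finally have "card (Sub n m) * m ^ d \<le> n ^ m" using m1 by simp
  with A show ?thesis by simp
qed




lemma frac4:
  fixes a1 a2 a3 a4 :: int and q1 q2 q3 q4 :: nat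
  assumes "q1 \<ge> 1" "q2 \<ge> 1" "q3 \<ge> 1" "q4 \<ge> 1"
    and "a1/q1 + a2/q2 - a3/q3 - a4/q4 \<noteq> (0::real)"
  shows "1 / real (q1 * q2 * q3 * q4) \<le> \<bar>a1/q1 + a2/q2 - a3/q3 - a4/q4\<bar>"
proof -
  let ?x = "a1/q1 + a2/q2 - a3/q3 - a4/q4 :: real"
  define z where "z = a1 * q2 * q3 * q4 + q1 * a2 * q3 * q4 - q1 * q2 * a3 * q4 - q1 * q2 * q3 * a4"
  have Q: "real (q1 * q2 * q3 * q4) > 0" using assms by simp
  have "?x * real (q1 * q2 * q3 * q4) = of_int z"
    using assms unfolding z_def by (simp add: field_simps)
  then have "z \<noteq> 0" using assms(5) Q by auto
  then have "\<bar>of_int z\<bar> \<ge> (1::real)" by linarith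
  then have "\<bar>?x\<bar> * real (q1 * q2 * q3 * q4) \<ge> 1"
    using \<open>?x * _ = _\<close> Q by (metis abs_mult abs_of_pos)
  then show ?thesis using Q by (simp add: field_simps)
qed

lemma norm_lc:
  fixes \<mu> :: "nat \<Rightarrow> real ^ 'd" and g :: "nat \<Rightarrow> 'd \<Rightarrow> real"
  shows "norm (lincomb n (\<lambda>i. \<mu> i + vec_lambda (g i)) c1 + lincomb n (\<lambda>i. \<mu> i + vec_lambda (g i)) c2
     - lincomb n (\<lambda>i. \<mu> i + vec_lambda (g i)) c3 - lincomb n (\<lambda>i. \<mu> i + vec_lambda (g i)) c4)
   = sqrt (\<Sum>j\<in>UNIV. (\<Sum>i<n. (c1 i + c2 i - c3 i - c4 i) * (\<mu> i $ j + g i j))\<^sup>2)"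
proof -
  have "(lincomb n (\<lambda>i. \<mu> i + vec_lambda (g i)) c1 + lincomb n (\<lambda>i. \<mu> i + vec_lambda (g i)) c2
     - lincomb n (\<lambda>i. \<mu> i + vec_lambda (g i)) c3 - lincomb n (\<lambda>i. \<mu> i + vec_lambda (g i)) c4) $ j
     = (\<Sum>i<n. (c1 i + c2 i - c3 i - c4 i) * (\<mu> i $ j + g i j))" for j
    by (simp add: lincomb_def sum.distrib[symmetric] sum_subtractf[symmetric] algebra_simps)
  then show ?thesis by (simp add: norm_vec_def L2_set_def)
qed




definition T3 :: "nat \<Rightarrow> nat \<Rightarrow> (nat \<times> nat \<times> nat set) set" where
  "T3 n m = {1..n^2} \<times> {1..<n} \<times> Sub n m"

definition kc :: "nat \<times> nat \<times> nat set \<Rightarrow> nat \<Rightarrow> real" where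
  "kc p = key_coeffs (fst p) (fst (snd p)) (snd (snd p))"

definition qq :: "nat \<times> nat \<times> nat set \<Rightarrow> nat" where
  "qq p = fst (snd p) * card (snd (snd p))"

lemma T3_finite: "finite (T3 n m)"
  by (simp add: T3_def Sub_finite)

lemma card_le_floor:
  assumes "x \<ge> 0"
  shows "real c \<le> x \<longleftrightarrow> c \<le> nat \<lfloor>x\<rfloor>"
  using assms by (simp add: le_nat_iff le_floor_iff)

lemma kv_iff:
  assumes "m = nat \<lfloor>4 * real d * sqrt (real k)\<rfloor>"
  shows "is_key_value n d k c \<longleftrightarrow> (\<exists>p\<in>T3 n m. c = kc p)"
proof -
  have cf: "real (card S) \<le> 4 * real d * sqrt (real k) \<longleftrightarrow> card S \<le> m" for S
    unfolding assms by (rule card_le_floor) simp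
  show ?thesis
  proof
    assume "is_key_value n d k c"
    then obtain s t S where h: "1 \<le> s" "s \<le> n^2" "1 \<le> t" "t < n" "S \<subseteq> {..<n}" "S \<noteq> {}"
      "card S \<le> m" "c = key_coeffs s t S"
      unfolding is_key_value_def cf by blast
    then have "(s, t, S) \<in> T3 n m" by (auto simp: T3_def Sub_def)
    moreover have "c = kc (s, t, S)" using h by (simp add: kc_def)
    ultimately show "\<exists>p\<in>T3 n m. c = kc p" by blast
  next
    assume "\<exists>p\<in>T3 n m. c = kc p"
    then obtain s t S where h: "(s, t, S) \<in> T3 n m" "c = kc (s, t, S)" by auto
    then show "is_key_value n d k c"
      unfolding is_key_value_def cf by (auto simp: T3_def Sub_def kc_def)
  qed
qed

lemma kc_zero: "p \<in> T3 n m \<Longrightarrow> \<not> i < n \<Longrightarrow> kc p i = 0"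
  by (auto simp: T3_def Sub_def kc_def key_coeffs_def)

lemma kc_frac: "kc p i = real_of_int (if i \<in> snd (snd p) then int (fst p) else 0) / real (qq p)"
  by (simp add: kc_def qq_def key_coeffs_def)

lemma qq_ge1: "p \<in> T3 n m \<Longrightarrow> qq p \<ge> 1"
proof -
  assume "p \<in> T3 n m"
  then have "fst (snd p) \<ge> 1" "snd (snd p) \<subseteq> {..<n}" "snd (snd p) \<noteq> {}"
    by (auto simp: T3_def Sub_def)
  moreover then have "card (snd (snd p)) \<ge> 1"
    by (metis One_nat_def Suc_leI card_gt_0_iff finite_lessThan finite_subset)
  ultimately show ?thesis by (simp add: qq_def)
qed

lemma sum_prod_pair:
  fixes g :: "'a \<Rightarrow> 'c::comm_semiring_1" and h :: "'b \<Rightarrow> 'c"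
  shows "(\<Sum>P\<in>A \<times> B. g (fst P) * h (snd P)) = sum g A * sum h B"
  by (simp add: sum_product sum.cartesian_product case_prod_beta)

lemma sum4:
  fixes f :: "'a \<Rightarrow> real"
  shows "(\<Sum>P\<in>A \<times> A \<times> A \<times> A. f (fst P) * f (fst (snd P)) * f (fst (snd (snd P))) * f (snd (snd (snd P))))
     = (sum f A) ^ 4"
proof -
  have "(\<Sum>P\<in>A \<times> A \<times> A \<times> A. f (fst P) * f (fst (snd P)) * f (fst (snd (snd P))) * f (snd (snd (snd P))))
    = (\<Sum>P\<in>A \<times> (A \<times> A \<times> A). f (fst P) * ((\<lambda>R. f (fst R) * f (fst (snd R)) * f (snd (snd R))) (snd P)))"
    by (simp add: mult.assoc)
  also have "\<dots> = sum f A * (\<Sum>R\<in>A \<times> (A \<times> A). f (fst R) * ((\<lambda>R. f (fst R) * f (snd R)) (snd R)))"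
    by (subst sum_prod_pair) (simp add: mult.assoc)
  also have "\<dots> = sum f A * (sum f A * (sum f A * sum f A))"
    using sum_prod_pair[of f "\<lambda>R. f (fst R) * f (snd R)" A "A \<times> A"] sum_prod_pair[of f f A A]
    by simp
  finally show ?thesis by (simp add: power4_eq_xxxx)
qed

lemma sumT3:
  "(\<Sum>p\<in>T3 n m. qq p ^ d) = n^2 * (\<Sum>t\<in>{1..<n}. t ^ d) * (\<Sum>S\<in>Sub n m. card S ^ d)"
proof -
  have "(\<Sum>p\<in>T3 n m. qq p ^ d) = (\<Sum>p\<in>{1..n^2} \<times> ({1..<n} \<times> Sub n m). (\<lambda>_. 1::nat) (fst p) * ((\<lambda>R. fst R ^ d * card (snd R) ^ d) (snd p)))"
    unfolding T3_def qq_def by (simp add: power_mult_distrib)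
  also have "\<dots> = n^2 * (\<Sum>R\<in>{1..<n} \<times> Sub n m. fst R ^ d * card (snd R) ^ d)"
    by (subst sum_prod_pair) simp
  also have "(\<Sum>R\<in>{1..<n} \<times> Sub n m. fst R ^ d * card (snd R) ^ d) = (\<Sum>t\<in>{1..<n}. t ^ d) * (\<Sum>S\<in>Sub n m. card S ^ d)"
    by (rule sum_prod_pair)
  finally show ?thesis by (simp add: mult.assoc)
qed

lemma sumt: "(\<Sum>t\<in>{1..<n}. t ^ d) \<le> (n::nat) ^ (d + 1)"
proof -
  have "(\<Sum>t\<in>{1..<n}. t ^ d) \<le> (\<Sum>t\<in>{1..<n}. n ^ d)"
    by (rule sum_mono) (simp add: power_mono)
  also have "\<dots> \<le> n * n ^ d" by simp
  finally show ?thesis by simp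
qed




theorem lemma11:
  fixes n k :: nat and \<sigma> \<delta> :: real and \<mu> :: "nat \<Rightarrow> real ^ 'd"
  assumes "1 \<le> k" and "k \<le> n" and "CARD('d) \<le> n" and "\<sigma> > 0" and "\<delta> > 0"
    and "\<forall>i<n. \<forall>j. 0 \<le> \<mu> i $ j \<and> \<mu> i $ j \<le> 1"
  defines "M \<equiv> PiM {..<n} (\<lambda>_. PiM (UNIV :: 'd set) (\<lambda>_. density lborel (normal_density 0 \<sigma>)))"
  defines "E \<equiv> {g \<in> space M. \<not> delta_sparse n CARD('d) k \<delta> (\<lambda>i. \<mu> i + vec_lambda (g i))}"
  shows "E \<in> sets M \<and>
    measure M E \<le> real n powr (16 * real CARD('d) * sqrt (real k) + 12)
                    * (real n ^ 4 * \<delta> / \<sigma>) ^ CARD('d)"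
proof -
  define d where "d = CARD('d)"
  define m where "m = nat \<lfloor>4 * real d * sqrt (real k)\<rfloor>"
  have d1: "1 \<le> d" unfolding d_def by (simp add: Suc_le_eq)
  have sk: "sqrt (real k) \<ge> 1" using assms(1) by simp
  have m4: "4 * d \<le> m"
  proof -
    have "real (4 * d) \<le> 4 * real d * sqrt (real k)" using sk d1 by simp
    then show ?thesis unfolding m_def by (subst card_le_floor[symmetric]) (use sk in auto)
  qed
  have mle: "real m \<le> 4 * real d * sqrt (real k)"
    unfolding m_def using sk by (subst card_le_floor) auto
  define T4 where "T4 = T3 n m \<times> T3 n m \<times> T3 n m \<times> T3 n m"
  define wv where "wv P i = kc (fst P) i + kc (fst (snd P)) i - kc (fst (snd (snd P))) i - kc (snd (snd (snd P))) i"
    for P :: "(nat \<times> nat \<times> nat set) \<times> (nat \<times> nat \<times> nat set) \<times> (nat \<times> nat \<times> nat set) \<times> (nat \<times> nat \<times> nat set)" and i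
  define Q where "Q P = qq (fst P) * qq (fst (snd P)) * qq (fst (snd (snd P))) * qq (snd (snd (snd P)))"
    for P :: "(nat \<times> nat \<times> nat set) \<times> (nat \<times> nat \<times> nat set) \<times> (nat \<times> nat \<times> nat set) \<times> (nat \<times> nat \<times> nat set)"
  define Fw where "Fw w g = sqrt (\<Sum>j\<in>UNIV. (\<Sum>i<n. w i * (\<mu> i $ j + g i j))\<^sup>2)"
    for w :: "nat \<Rightarrow> real" and g :: "nat \<Rightarrow> 'd \<Rightarrow> real"
  define Tup where "Tup = {P \<in> T4. \<exists>i<n. wv P i \<noteq> 0}"
  define A where "A P = {g \<in> space M. Fw (wv P) g \<le> \<delta>}" for P
  have T4fin: "finite T4" by (simp add: T4_def T3_finite)
  have Tupfin: "finite Tup" using T4fin by (simp add: Tup_def)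
  have kv: "is_key_value n d k c \<longleftrightarrow> (\<exists>p\<in>T3 n m. c = kc p)" for c
    by (rule kv_iff[OF m_def])
  have PP: "prob_space (PiM (UNIV :: 'd set) (\<lambda>_. density lborel (normal_density 0 \<sigma>)))"
    by (intro prob_space_PiM prob_space_normal_density assms(4))
  interpret MP: prob_space M unfolding M_def by (intro prob_space_PiM PP)
  have Ameas: "A P \<in> sets M" for P
    unfolding A_def Fw_def M_def using sq_meas[where w="wv P" and c="\<lambda>i j. \<mu> i $ j" and n=n and \<sigma>=\<sigma> and \<delta>=\<delta>]
    by simp
  have E_eq: "E = (\<Union>P\<in>Tup. A P)"
  proof (intro equalityI subsetI)
    fix g assume "g \<in> E"
    then have gs: "g \<in> space M" and ns: "\<not> delta_sparse n d k \<delta> (\<lambda>i. \<mu> i + vec_lambda (g i))"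
      unfolding E_def d_def by auto
    from ns obtain c1 c2 c3 c4 where kvs: "is_key_value n d k c1" "is_key_value n d k c2"
      "is_key_value n d k c3" "is_key_value n d k c4"
      and nrm: "norm (lincomb n (\<lambda>i. \<mu> i + vec_lambda (g i)) c1 + lincomb n (\<lambda>i. \<mu> i + vec_lambda (g i)) c2
     - lincomb n (\<lambda>i. \<mu> i + vec_lambda (g i)) c3 - lincomb n (\<lambda>i. \<mu> i + vec_lambda (g i)) c4) \<le> \<delta>"
      and ne: "(\<lambda>i. c1 i + c2 i) \<noteq> (\<lambda>i. c3 i + c4 i)"
      unfolding delta_sparse_def by blast
    from kvs obtain p1 p2 p3 p4 where ps: "p1 \<in> T3 n m" "p2 \<in> T3 n m" "p3 \<in> T3 n m" "p4 \<in> T3 n m"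
      and cs: "c1 = kc p1" "c2 = kc p2" "c3 = kc p3" "c4 = kc p4"
      unfolding kv by blast
    let ?P = "(p1, p2, p3, p4)"
    from ne obtain i where i: "c1 i + c2 i \<noteq> c3 i + c4 i" by auto
    have "i < n"
    proof (rule ccontr)
      assume "\<not> i < n"
      then have "kc p1 i = 0" "kc p2 i = 0" "kc p3 i = 0" "kc p4 i = 0"
        using kc_zero ps by blast+
      then show False using i unfolding cs by simp
    qed
    then have "?P \<in> Tup" using i ps unfolding Tup_def T4_def wv_def cs by auto
    moreover have "g \<in> A ?P"
      using nrm gs unfolding A_def Fw_def norm_lc wv_def cs by simp
    ultimately show "g \<in> (\<Union>P\<in>Tup. A P)" by blast
  next
    fix g assume "g \<in> (\<Union>P\<in>Tup. A P)"
    then obtain P where P: "P \<in> Tup" "g \<in> A P" by blast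
    obtain p1 p2 p3 p4 where Pe: "P = (p1, p2, p3, p4)" by (cases P) auto
    have ps: "p1 \<in> T3 n m" "p2 \<in> T3 n m" "p3 \<in> T3 n m" "p4 \<in> T3 n m"
      using P(1) unfolding Tup_def T4_def Pe by auto
    obtain i where "i < n" "wv P i \<noteq> 0" using P(1) unfolding Tup_def by auto
    then have ne: "(\<lambda>i. kc p1 i + kc p2 i) \<noteq> (\<lambda>i. kc p3 i + kc p4 i)"
      unfolding wv_def Pe by (auto dest: fun_cong[where x=i])
    have gs: "g \<in> space M" using P(2) unfolding A_def by auto
    have nrm: "norm (lincomb n (\<lambda>i. \<mu> i + vec_lambda (g i)) (kc p1) + lincomb n (\<lambda>i. \<mu> i + vec_lambda (g i)) (kc p2)
     - lincomb n (\<lambda>i. \<mu> i + vec_lambda (g i)) (kc p3) - lincomb n (\<lambda>i. \<mu> i + vec_lambda (g i)) (kc p4)) \<le> \<delta>"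
      using P(2) unfolding A_def Fw_def norm_lc wv_def Pe by simp
    have "\<not> delta_sparse n d k \<delta> (\<lambda>i. \<mu> i + vec_lambda (g i))"
      unfolding delta_sparse_def
      apply (simp only: not_all)
      apply (rule exI[of _ "kc p1"], rule exI[of _ "kc p2"], rule exI[of _ "kc p3"], rule exI[of _ "kc p4"])
      using ps nrm ne unfolding kv by blast
    then show "g \<in> E" using gs unfolding E_def d_def by auto
  qed
  have Esets: "E \<in> sets M" unfolding E_eq using Tupfin Ameas by auto
  have Abound: "measure M (A P) \<le> (\<delta> / \<sigma>) ^ d * real (Q P) ^ d" if PT: "P \<in> Tup" for P
  proof -
    obtain p1 p2 p3 p4 where Pe: "P = (p1, p2, p3, p4)" by (cases P) auto
    have ps: "p1 \<in> T3 n m" "p2 \<in> T3 n m" "p3 \<in> T3 n m" "p4 \<in> T3 n m"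
      using PT unfolding Tup_def T4_def Pe by auto
    obtain i0 where i0: "i0 < n" "wv P i0 \<noteq> 0" using PT unfolding Tup_def by auto
    let ?w = "wv P"
    define a where "a j = (\<Sum>i<n. ?w i * \<mu> i $ j)" for j
    let ?B = "{g \<in> space M. \<forall>j. \<bar>a j + (\<Sum>i<n. ?w i * g i j)\<bar> \<le> \<delta>}"
    have Bm: "?B \<in> sets M" unfolding M_def by (rule event_meas)
    have sub: "A P \<subseteq> ?B"
    proof
      fix g assume g: "g \<in> A P"
      have "\<bar>a j + (\<Sum>i<n. ?w i * g i j)\<bar> \<le> \<delta>" for j
      proof -
        have eq: "a j + (\<Sum>i<n. ?w i * g i j) = (\<Sum>i<n. ?w i * (\<mu> i $ j + g i j))"
          unfolding a_def by (simp add: sum.distrib[symmetric] algebra_simps)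
        have "(\<Sum>i<n. ?w i * (\<mu> i $ j + g i j))\<^sup>2 \<le> (\<Sum>j\<in>UNIV. (\<Sum>i<n. ?w i * (\<mu> i $ j + g i j))\<^sup>2)"
          by (rule member_le_sum) auto
        then have "\<bar>\<Sum>i<n. ?w i * (\<mu> i $ j + g i j)\<bar>\<^sup>2 \<le> (\<Sum>j\<in>UNIV. (\<Sum>i<n. ?w i * (\<mu> i $ j + g i j))\<^sup>2)"
          by (simp only: power2_abs)
        then have "\<bar>\<Sum>i<n. ?w i * (\<mu> i $ j + g i j)\<bar> \<le> Fw ?w g"
          unfolding Fw_def by (rule real_le_rsqrt)
        then show ?thesis using g eq unfolding A_def by auto
      qed
      then show "g \<in> ?B" using g unfolding A_def by auto
    qed
    have "measure M (A P) \<le> measure M ?B" using sub Bm by (rule MP.finite_measure_mono)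
    also have "\<dots> \<le> (\<delta> / (\<bar>?w i0\<bar> * \<sigma>)) ^ d"
    proof -
      have "emeasure M ?B \<le> ennreal ((\<delta> / (\<bar>?w i0\<bar> * \<sigma>)) ^ d)"
        unfolding M_def d_def by (rule event_bound) (use assms i0 in auto)
      then show ?thesis using assms(4,5) by (simp add: MP.emeasure_eq_measure ennreal_le_iff)
    qed
    also have "\<dots> \<le> (\<delta> / \<sigma> * real (Q P)) ^ d"
    proof (rule power_mono)
      have w0: "?w i0 = kc p1 i0 + kc p2 i0 - kc p3 i0 - kc p4 i0" unfolding wv_def Pe by simp
      have QP: "Q P = qq p1 * qq p2 * qq p3 * qq p4" unfolding Q_def Pe by simp
      define ai where "ai p = (if i0 \<in> snd (snd p) then int (fst p) else 0)" for p :: "nat \<times> nat \<times> nat set"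
      have kf: "kc p i0 = real_of_int (ai p) / real (qq p)" for p unfolding ai_def by (rule kc_frac)
      have nz: "real_of_int (ai p1) / real (qq p1) + real_of_int (ai p2) / real (qq p2)
          - real_of_int (ai p3) / real (qq p3) - real_of_int (ai p4) / real (qq p4) \<noteq> 0"
        using i0(2) unfolding w0 kf .
      have "1 / real (Q P) \<le> \<bar>?w i0\<bar>"
        unfolding QP w0 kf
        by (rule frac4[OF qq_ge1[OF ps(1)] qq_ge1[OF ps(2)] qq_ge1[OF ps(3)] qq_ge1[OF ps(4)] nz])
      moreover have "Q P \<ge> 1" unfolding Q_def Pe
        using qq_ge1[OF ps(1)] qq_ge1[OF ps(2)] qq_ge1[OF ps(3)] qq_ge1[OF ps(4)] by simp
      ultimately have "1 / \<bar>?w i0\<bar> \<le> real (Q P)" using i0(2)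
        by (simp add: field_simps)
      then have "\<delta> / \<sigma> * (1 / \<bar>?w i0\<bar>) \<le> \<delta> / \<sigma> * real (Q P)"
        using assms(4,5) by (intro mult_left_mono) auto
      then show "\<delta> / (\<bar>?w i0\<bar> * \<sigma>) \<le> \<delta> / \<sigma> * real (Q P)" by (simp add: field_simps)
      show "0 \<le> \<delta> / (\<bar>?w i0\<bar> * \<sigma>)" using assms(4,5) by simp
    qed
    also have "\<dots> = (\<delta> / \<sigma>) ^ d * real (Q P) ^ d" by (rule power_mult_distrib)
    finally show ?thesis .
  qed
  have St1: "measure M E \<le> (\<Sum>P\<in>Tup. measure M (A P))"
    unfolding E_eq using Tupfin Ameas by (intro measure_UNION_le) auto
  have St2: "(\<Sum>P\<in>Tup. measure M (A P)) \<le> (\<delta> / \<sigma>) ^ d * (\<Sum>P\<in>T4. real (Q P) ^ d)"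
  proof -
    have "(\<Sum>P\<in>Tup. measure M (A P)) \<le> (\<Sum>P\<in>Tup. (\<delta> / \<sigma>) ^ d * real (Q P) ^ d)"
      by (rule sum_mono) (erule Abound)
    also have "\<dots> \<le> (\<Sum>P\<in>T4. (\<delta> / \<sigma>) ^ d * real (Q P) ^ d)"
      by (rule sum_mono2[OF T4fin]) (use assms(4,5) in \<open>auto simp: Tup_def\<close>)
    also have "\<dots> = (\<delta> / \<sigma>) ^ d * (\<Sum>P\<in>T4. real (Q P) ^ d)" by (rule sum_distrib_left[symmetric])
    finally show ?thesis .
  qed
  have St3: "(\<Sum>P\<in>T4. real (Q P) ^ d) = real (\<Sum>p\<in>T3 n m. qq p ^ d) ^ 4"
  proof -
    have "(\<Sum>P\<in>T4. real (Q P) ^ d) = (\<Sum>p\<in>T3 n m. real (qq p) ^ d) ^ 4"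
      unfolding T4_def Q_def using sum4[of "\<lambda>p. real (qq p) ^ d" "T3 n m"]
      by (simp add: power_mult_distrib)
    then show ?thesis by simp
  qed
  have St4: "(\<Sum>p\<in>T3 n m. qq p ^ d) \<le> n ^ (m + d + 3)"
  proof -
    have "(\<Sum>p\<in>T3 n m. qq p ^ d) = n^2 * (\<Sum>t\<in>{1..<n}. t ^ d) * (\<Sum>S\<in>Sub n m. card S ^ d)"
      by (rule sumT3)
    also have "\<dots> \<le> n^2 * n ^ (d + 1) * n ^ m"
      by (intro mult_le_mono sumt Sub_sum d1 m4 order_refl)
    also have "\<dots> = n ^ (m + d + 3)"
    proof -
      have "m + d + 3 = 2 + (d + 1) + m" by simp
      then show ?thesis by (simp only: power_add)
    qed
    finally show ?thesis .
  qed
  have St5: "real (\<Sum>p\<in>T3 n m. qq p ^ d) ^ 4 \<le> real (n ^ (m + d + 3)) ^ 4"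
    by (rule power_mono) (simp_all only: of_nat_le_iff of_nat_0_le_iff St4)
  have St6: "(\<delta> / \<sigma>) ^ d * real (n ^ (m + d + 3)) ^ 4 = real n ^ (12 + 4 * m) * (real n ^ 4 * \<delta> / \<sigma>) ^ d"
  proof -
    have ex: "(m + d + 3) * 4 = (12 + 4 * m) + 4 * d" by simp
    have e1: "real (n ^ (m + d + 3)) ^ 4 = real n ^ (12 + 4 * m) * real n ^ (4 * d)"
    proof -
      have "real (n ^ (m + d + 3)) ^ 4 = real n ^ ((m + d + 3) * 4)"
        by (simp only: of_nat_power power_mult)
      also have "\<dots> = real n ^ ((12 + 4 * m) + 4 * d)" by (simp only: ex)
      also have "\<dots> = real n ^ (12 + 4 * m) * real n ^ (4 * d)" by (rule power_add)
      finally show ?thesis .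
    qed
    have e2: "(real n ^ 4 * \<delta> / \<sigma>) ^ d = real n ^ (4 * d) * (\<delta> / \<sigma>) ^ d"
      by (simp only: times_divide_eq_right[symmetric] power_mult_distrib power_mult)
    show ?thesis unfolding e1 e2 by (simp only: ac_simps)
  qed
  have n1: "real n \<ge> 1" using assms(1,2) by simp
  have St7: "real n ^ (12 + 4 * m) \<le> real n powr (16 * real d * sqrt (real k) + 12)"
  proof -
    have "real n ^ (12 + 4 * m) = real n powr (real (12 + 4 * m))"
      by (rule powr_realpow[symmetric]) (use n1 in simp)
    also have "\<dots> \<le> real n powr (16 * real d * sqrt (real k) + 12)"
      using n1 mle by (intro powr_mono) auto
    finally show ?thesis .
  qed
  have dpos: "0 \<le> (\<delta> / \<sigma>) ^ d" using assms(4,5) by simp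
  have "measure M E \<le> (\<delta> / \<sigma>) ^ d * real (\<Sum>p\<in>T3 n m. qq p ^ d) ^ 4"
    using St1 St2 St3 by simp
  also have "\<dots> \<le> (\<delta> / \<sigma>) ^ d * real (n ^ (m + d + 3)) ^ 4"
    by (rule mult_left_mono[OF St5 dpos])
  also have "\<dots> = real n ^ (12 + 4 * m) * (real n ^ 4 * \<delta> / \<sigma>) ^ d" by (rule St6)
  also have "\<dots> \<le> real n powr (16 * real d * sqrt (real k) + 12) * (real n ^ 4 * \<delta> / \<sigma>) ^ d"
    by (rule mult_right_mono[OF St7]) (use assms(4,5) in simp)
  finally show ?thesis using Esets unfolding d_def by simp
qed


end
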